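(* Let $(A^\bullet,[\cdot,\cdot],\mathrm{D},R,\rho_0)$ be a strongly anchored DGLA with bracket of degree $d$ over $R=C^\infty(M)$ for a smooth manifold $M$, such that $A^{-d-1}$ and $A^{-d-2}$ are finitely generated projective $C^\infty(M)$-modules, hence $A^{-d-1}\cong\Gamma(W)$ and $A^{-d-2}\cong\Gamma(V)$ for vector bundles $W,V\to M$ (so $\mathrm{D}:\Gamma(V)\to\Gamma(W)$). Define for $\phi,\psi\in\Gamma(W)$, $v\in\Gamma(V)$, $f\in C^\infty(M)$: $[\phi,\psi]_W:=[\mathrm{D}\phi,\psi]$, $\rho(\phi)[f]:=\rho_0(\mathrm{D}\phi)[f]$, $\langle\phi,\psi\rangle:=[\phi,\psi]$, $\rho_D(\phi)[v]:=[\mathrm{D}\phi,v]$. Then $\langle\cdot,\cdot\rangle$ is $C^\infty(M)$-bilinear if and only if $[\psi,f\phi]=f[\psi,\phi]$ for all $f\in C^\infty(M)$, $\psi,\phi\in\Gamma(W)$. If this holds and the induced symmetric bundle map $\langle\cdot,\cdot\rangle:W\otimes_MW\to V$ is non-degenerate and surjective, then $(W,V,[\cdot,\cdot]_W,\rho,\langle\cdot,\cdot\rangle,\mathrm{D}|_{\Gamma(V)},\rho_D)$ is a Vinogradov algebroid.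
   Context: A graded Leibniz–Loday algebra of degree $d$: graded vector space $A^\bullet$ with bracket $[A^k,A^l]\subset A^{k+l+d}$ and $[a,[b,c]]=[[a,b],c]+(-1)^{(|a|+d)(|b|+d)}[b,[a,c]]$; DGLA: additionally $\mathrm{D}:A^\bullet\to A^{\bullet+1}$, $\mathrm{D}^2=0$, $\mathrm{D}[a,b]=[\mathrm{D}a,b]+(-1)^{|a|+d}[a,\mathrm{D}b]$, and $[b,a]=-(-1)^{(|a|+d)(|b|+d)}[a,b]$. Strongly anchored over $R$ (each $A^k$ an $R$-module, $\rho_0:A^{-d}\to\mathrm{End}_{\mathbb{R}}(R)$): $[\phi,f\psi]=\rho_0(\phi)(f)\psi+f[\phi,\psi]$ for $\phi\in A^{-d}$; $\rho_0$ is $R$-linear; $\rho_0(\mathrm{D}(f\phi))=f\rho_0(\mathrm{D}\phi)$ for $\phi\in A^{-d-1}$; and $\mathrm{D}(fg\psi)+fg\mathrm{D}\psi=f\mathrm{D}(g\psi)+g\mathrm{D}(f\psi)$. A Vinogradov algebroid over $M$: vector bundles $W,V$; $\mathbb{R}$-bilinear bracket $[\cdot,\cdot]_W$ on $\Gamma(W)$; bundle map $\rho:W\to TM$; symmetric surjective non-degenerate bundle map $\langle\cdot,\cdot\rangle:W\otimes_MW\to V$; $\mathbb{R}$-linear $\mathrm{D}:\Gamma(V)\to\Gamma(W)$; $\mathbb{R}$-linear $\rho_D$ assigning to $\phi\in\Gamma(W)$ an $\mathbb{R}$-linear $\rho_D(\phi):\Gamma(V)\to\Gamma(V)$ with $\rho_D(\phi)(fv)=(\rho(\phi)f)v+f\rho_D(\phi)v$;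 with axioms $[\psi,[\phi_1,\phi_2]_W]_W=[[\psi,\phi_1]_W,\phi_2]_W+[\phi_1,[\psi,\phi_2]_W]_W$, $[\psi,\psi]_W=\tfrac12\mathrm{D}\langle\psi,\psi\rangle$, $\rho_D(\psi)\langle\phi,\phi\rangle=2\langle[\psi,\phi]_W,\phi\rangle$, $\mathrm{D}(fgv)+fg\mathrm{D}v=f\mathrm{D}(gv)+g\mathrm{D}(fv)$. *)

theory Defs
  imports Main "HOL.Real_Vector_Spaces"
begin

text \<open>Algebraic (Serre--Swan) rendering. The ring R = C-infinity(M) is modelled as an
abstract commutative real algebra 'r; sections of vector bundles are modelled as finitely
generated projective R-modules; bundle maps as R-linear maps of section modules; vector
fields (sections of TM) as real-linear derivations of R. The graded space A is modelled
inside an ambient abelian group 'a by subsets A k (the homogeneous elements of degree k).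
Real scalar multiplication is the one induced by R, i.e. smul (of_real c).\<close>

definition sgnx :: "int \<Rightarrow> 'a::ab_group_add \<Rightarrow> 'a" where
  "sgnx e x = (if even e then x else - x)"

definition module_on :: "('r::{comm_ring_1,real_algebra_1} \<Rightarrow> 'a::ab_group_add \<Rightarrow> 'a) \<Rightarrow> 'a set \<Rightarrow> bool" where
  "module_on smul S \<longleftrightarrow>
     0 \<in> S \<and> (\<forall>x\<in>S. \<forall>y\<in>S. x + y \<in> S) \<and> (\<forall>x\<in>S. - x \<in> S) \<and>
     (\<forall>f. \<forall>x\<in>S. smul f x \<in> S) \<and>
     (\<forall>f g. \<forall>x\<in>S. smul (f + g) x = smul f x + smul g x) \<and>
     (\<forall>f. \<forall>x\<in>S. \<forall>y\<in>S. smul f (x + y) = smul f x + smul f y) \<and>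
     (\<forall>f g. \<forall>x\<in>S. smul (f * g) x = smul f (smul g x)) \<and>
     (\<forall>x\<in>S. smul 1 x = x)"

text \<open>Finitely generated projective: a direct summand of R^n.\<close>
definition fgp_module :: "('r::{comm_ring_1,real_algebra_1} \<Rightarrow> 'a::ab_group_add \<Rightarrow> 'a) \<Rightarrow> 'a set \<Rightarrow> bool" where
  "fgp_module smul S \<longleftrightarrow> module_on smul S \<and>
     (\<exists>(n::nat) (i::'a \<Rightarrow> nat \<Rightarrow> 'r) (p::(nat \<Rightarrow> 'r) \<Rightarrow> 'a).
        (\<forall>x\<in>S. \<forall>j\<ge>n. i x j = 0) \<and>
        (\<forall>x\<in>S. \<forall>y\<in>S. i (x + y) = (\<lambda>j. i x j + i y j)) \<and>
        (\<forall>f. \<forall>x\<in>S. i (smul f x) = (\<lambda>j. f * i x j)) \<and>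
        (\<forall>u. (\<forall>j\<ge>n. u j = 0) \<longrightarrow> p u \<in> S) \<and>
        (\<forall>u v. (\<forall>j\<ge>n. u j = 0) \<longrightarrow> (\<forall>j\<ge>n. v j = 0) \<longrightarrow> p (\<lambda>j. u j + v j) = p u + p v) \<and>
        (\<forall>f u. (\<forall>j\<ge>n. u j = 0) \<longrightarrow> p (\<lambda>j. f * u j) = smul f (p u)) \<and>
        (\<forall>x\<in>S. p (i x) = x))"

definition graded_module :: "('r::{comm_ring_1,real_algebra_1} \<Rightarrow> 'a::ab_group_add \<Rightarrow> 'a) \<Rightarrow> (int \<Rightarrow> 'a set) \<Rightarrow> bool" where
  "graded_module smul A \<longleftrightarrow> (\<forall>k. module_on smul (A k)) \<and> (\<forall>k l. k \<noteq> l \<longrightarrow> A k \<inter> A l \<subseteq> {0})"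

definition real_linear_on :: "('r::{comm_ring_1,real_algebra_1} \<Rightarrow> 'a::ab_group_add \<Rightarrow> 'a) \<Rightarrow> 'a set \<Rightarrow> ('a \<Rightarrow> 'a) \<Rightarrow> bool" where
  "real_linear_on smul S g \<longleftrightarrow>
     (\<forall>x\<in>S. \<forall>y\<in>S. g (x + y) = g x + g y) \<and>
     (\<forall>c::real. \<forall>x\<in>S. g (smul (of_real c) x) = smul (of_real c) (g x))"

definition real_bilinear_on :: "('r::{comm_ring_1,real_algebra_1} \<Rightarrow> 'a::ab_group_add \<Rightarrow> 'a) \<Rightarrow> 'a set \<Rightarrow> 'a set \<Rightarrow> ('a \<Rightarrow> 'a \<Rightarrow> 'a) \<Rightarrow> bool" where
  "real_bilinear_on smul S T b \<longleftrightarrow>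
     (\<forall>y\<in>T. real_linear_on smul S (\<lambda>x. b x y)) \<and> (\<forall>x\<in>S. real_linear_on smul T (\<lambda>y. b x y))"

definition graded_LL :: "('r::{comm_ring_1,real_algebra_1} \<Rightarrow> 'a::ab_group_add \<Rightarrow> 'a) \<Rightarrow> (int \<Rightarrow> 'a set) \<Rightarrow> int \<Rightarrow> ('a \<Rightarrow> 'a \<Rightarrow> 'a) \<Rightarrow> bool" where
  "graded_LL smul A d br \<longleftrightarrow> graded_module smul A \<and>
     (\<forall>k l. \<forall>a\<in>A k. \<forall>b\<in>A l. br a b \<in> A (k + l + d)) \<and>
     (\<forall>k l. real_bilinear_on smul (A k) (A l) br) \<and>
     (\<forall>k l m. \<forall>a\<in>A k. \<forall>b\<in>A l. \<forall>c\<in>A m.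
        br a (br b c) = br (br a b) c + sgnx ((k + d) * (l + d)) (br b (br a c)))"

definition DGLA :: "('r::{comm_ring_1,real_algebra_1} \<Rightarrow> 'a::ab_group_add \<Rightarrow> 'a) \<Rightarrow> (int \<Rightarrow> 'a set) \<Rightarrow> int \<Rightarrow> ('a \<Rightarrow> 'a \<Rightarrow> 'a) \<Rightarrow> ('a \<Rightarrow> 'a) \<Rightarrow> bool" where
  "DGLA smul A d br D \<longleftrightarrow> graded_LL smul A d br \<and>
     (\<forall>k. \<forall>a\<in>A k. D a \<in> A (k + 1)) \<and>
     (\<forall>k. real_linear_on smul (A k) D) \<and>
     (\<forall>k. \<forall>a\<in>A k. D (D a) = 0) \<and>
     (\<forall>k l. \<forall>a\<in>A k. \<forall>b\<in>A l. D (br a b) = br (D a) b + sgnx (k + d) (br a (D b))) \<and>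
     (\<forall>k l. \<forall>a\<in>A k. \<forall>b\<in>A l. br b a = - sgnx ((k + d) * (l + d)) (br a b))"

definition strongly_anchored :: "('r::{comm_ring_1,real_algebra_1} \<Rightarrow> 'a::ab_group_add \<Rightarrow> 'a) \<Rightarrow> (int \<Rightarrow> 'a set) \<Rightarrow> int \<Rightarrow> ('a \<Rightarrow> 'a \<Rightarrow> 'a) \<Rightarrow> ('a \<Rightarrow> 'a) \<Rightarrow> ('a \<Rightarrow> 'r \<Rightarrow> 'r) \<Rightarrow> bool" where
  "strongly_anchored smul A d br D rho0 \<longleftrightarrow>
     \<comment> \<open>rho0 takes values in real-linear endomorphisms of R\<close>
     (\<forall>\<phi>\<in>A (-d). (\<forall>f g. rho0 \<phi> (f + g) = rho0 \<phi> f + rho0 \<phi> g) \<and>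
                  (\<forall>(c::real) f. rho0 \<phi> (of_real c * f) = of_real c * rho0 \<phi> f)) \<and>
     \<comment> \<open>rho0 is R-linear\<close>
     (\<forall>\<phi>\<in>A (-d). \<forall>\<psi>\<in>A (-d). rho0 (\<phi> + \<psi>) = (\<lambda>f. rho0 \<phi> f + rho0 \<psi> f)) \<and>
     (\<forall>g. \<forall>\<phi>\<in>A (-d). rho0 (smul g \<phi>) = (\<lambda>f. g * rho0 \<phi> f)) \<and>
     \<comment> \<open>anchor identity\<close>
     (\<forall>\<phi>\<in>A (-d). \<forall>k. \<forall>\<psi>\<in>A k. \<forall>f. br \<phi> (smul f \<psi>) = smul (rho0 \<phi> f) \<psi> + smul f (br \<phi> \<psi>)) \<and>
     (\<forall>\<phi>\<in>A (-d-1). \<forall>f. rho0 (D (smul f \<phi>)) = (\<lambda>g. f * rho0 (D \<phi>) g)) \<and>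
     (\<forall>k. \<forall>\<psi>\<in>A k. \<forall>f g. D (smul (f * g) \<psi>) + smul (f * g) (D \<psi>) = smul f (D (smul g \<psi>)) + smul g (D (smul f \<psi>)))"

definition R_bilinear_on :: "('r::{comm_ring_1,real_algebra_1} \<Rightarrow> 'a::ab_group_add \<Rightarrow> 'a) \<Rightarrow> 'a set \<Rightarrow> 'a set \<Rightarrow> ('a \<Rightarrow> 'a \<Rightarrow> 'a) \<Rightarrow> bool" where
  "R_bilinear_on smul W V p \<longleftrightarrow>
     (\<forall>x\<in>W. \<forall>y\<in>W. p x y \<in> V) \<and>
     (\<forall>x\<in>W. \<forall>x'\<in>W. \<forall>y\<in>W. p (x + x') y = p x y + p x' y) \<and>
     (\<forall>x\<in>W. \<forall>y\<in>W. \<forall>y'\<in>W. p x (y + y') = p x y + p x y') \<and>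
     (\<forall>f. \<forall>x\<in>W. \<forall>y\<in>W. p (smul f x) y = smul f (p x y)) \<and>
     (\<forall>f. \<forall>x\<in>W. \<forall>y\<in>W. p x (smul f y) = smul f (p x y))"

definition R_linear_map :: "('r::{comm_ring_1,real_algebra_1} \<Rightarrow> 'a::ab_group_add \<Rightarrow> 'a) \<Rightarrow> 'a set \<Rightarrow> 'a set \<Rightarrow> ('a \<Rightarrow> 'a) \<Rightarrow> bool" where
  "R_linear_map smul W V h \<longleftrightarrow> (\<forall>x\<in>W. h x \<in> V) \<and>
     (\<forall>x\<in>W. \<forall>y\<in>W. h (x + y) = h x + h y) \<and> (\<forall>f. \<forall>x\<in>W. h (smul f x) = smul f (h x))"

text \<open>Fibrewise surjectivity of the bundle map, in terms of sections: every section of V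
is a finite sum of pairings.\<close>
definition surjective_pairing :: "('a::ab_group_add \<Rightarrow> 'a \<Rightarrow> 'a) \<Rightarrow> 'a set \<Rightarrow> 'a set \<Rightarrow> bool" where
  "surjective_pairing p W V \<longleftrightarrow>
     (\<forall>v\<in>V. \<exists>(n::nat) xs ys. (\<forall>i<n. xs i \<in> W \<and> ys i \<in> W) \<and> v = (\<Sum>i<n. p (xs i) (ys i)))"

text \<open>Fibrewise non-degeneracy (W -> Hom(W,V) fibrewise injective), in terms of sections:
the induced R-linear map Gamma(W) -> Hom_R(Gamma(W),Gamma(V)) has an R-linear left inverse.\<close>
definition nondegenerate_pairing :: "('r::{comm_ring_1,real_algebra_1} \<Rightarrow> 'a::ab_group_add \<Rightarrow> 'a) \<Rightarrow> ('a \<Rightarrow> 'a \<Rightarrow> 'a) \<Rightarrow> 'a set \<Rightarrow> 'a set \<Rightarrow> bool" where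
  "nondegenerate_pairing smul p W V \<longleftrightarrow>
     (\<exists>L :: ('a \<Rightarrow> 'a) \<Rightarrow> 'a.
        (\<forall>h. R_linear_map smul W V h \<longrightarrow> L h \<in> W) \<and>
        (\<forall>h h'. (\<forall>x\<in>W. h x = h' x) \<longrightarrow> L h = L h') \<and>
        (\<forall>h h'. R_linear_map smul W V h \<longrightarrow> R_linear_map smul W V h' \<longrightarrow> L (\<lambda>x. h x + h' x) = L h + L h') \<and>
        (\<forall>f h. R_linear_map smul W V h \<longrightarrow> L (\<lambda>x. smul f (h x)) = smul f (L h)) \<and>
        (\<forall>\<phi>\<in>W. L (p \<phi>) = \<phi>))"

definition is_derivation :: "('r::{comm_ring_1,real_algebra_1} \<Rightarrow> 'r) \<Rightarrow> bool" where
  "is_derivation X \<longleftrightarrow> (\<forall>f g. X (f + g) = X f + X g) \<and> (\<forall>(c::real) f. X (of_real c * f) = of_real c * X f) \<and>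
     (\<forall>f g. X (f * g) = f * X g + X f * g)"

definition vinogradov_algebroid ::
  "('r::{comm_ring_1,real_algebra_1} \<Rightarrow> 'a::ab_group_add \<Rightarrow> 'a) \<Rightarrow> 'a set \<Rightarrow> 'a set \<Rightarrow> ('a \<Rightarrow> 'a \<Rightarrow> 'a) \<Rightarrow> ('a \<Rightarrow> 'r \<Rightarrow> 'r)
    \<Rightarrow> ('a \<Rightarrow> 'a \<Rightarrow> 'a) \<Rightarrow> ('a \<Rightarrow> 'a) \<Rightarrow> ('a \<Rightarrow> 'a \<Rightarrow> 'a) \<Rightarrow> bool" where
  "vinogradov_algebroid smul W V brW rho pair Dv rhoD \<longleftrightarrow>
     \<comment> \<open>W, V vector bundles\<close>
     fgp_module smul W \<and> fgp_module smul V \<and>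
     \<comment> \<open>real-bilinear bracket on sections of W\<close>
     (\<forall>x\<in>W. \<forall>y\<in>W. brW x y \<in> W) \<and> real_bilinear_on smul W W brW \<and>
     \<comment> \<open>anchor: bundle map W -> TM\<close>
     (\<forall>\<phi>\<in>W. is_derivation (rho \<phi>)) \<and>
     (\<forall>\<phi>\<in>W. \<forall>\<psi>\<in>W. rho (\<phi> + \<psi>) = (\<lambda>f. rho \<phi> f + rho \<psi> f)) \<and>
     (\<forall>g. \<forall>\<phi>\<in>W. rho (smul g \<phi>) = (\<lambda>f. g * rho \<phi> f)) \<and>
     \<comment> \<open>symmetric surjective non-degenerate bundle map W (x) W -> V\<close>
     R_bilinear_on smul W V pair \<and> (\<forall>x\<in>W. \<forall>y\<in>W. pair x y = pair y x) \<and>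
     surjective_pairing pair W V \<and> nondegenerate_pairing smul pair W V \<and>
     \<comment> \<open>D : Gamma(V) -> Gamma(W) real-linear\<close>
     (\<forall>v\<in>V. Dv v \<in> W) \<and> real_linear_on smul V Dv \<and>
     \<comment> \<open>rho_D\<close>
     (\<forall>\<phi>\<in>W. \<forall>v\<in>V. rhoD \<phi> v \<in> V) \<and> (\<forall>\<phi>\<in>W. real_linear_on smul V (rhoD \<phi>)) \<and>
     (\<forall>\<phi>\<in>W. \<forall>\<phi>'\<in>W. \<forall>v\<in>V. rhoD (\<phi> + \<phi>') v = rhoD \<phi> v + rhoD \<phi>' v) \<and>
     (\<forall>(c::real). \<forall>\<phi>\<in>W. \<forall>v\<in>V. rhoD (smul (of_real c) \<phi>) v = smul (of_real c) (rhoD \<phi> v)) \<and>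
     (\<forall>\<phi>\<in>W. \<forall>f. \<forall>v\<in>V. rhoD \<phi> (smul f v) = smul (rho \<phi> f) v + smul f (rhoD \<phi> v)) \<and>
     \<comment> \<open>axioms\<close>
     (\<forall>\<psi>\<in>W. \<forall>\<phi>1\<in>W. \<forall>\<phi>2\<in>W. brW \<psi> (brW \<phi>1 \<phi>2) = brW (brW \<psi> \<phi>1) \<phi>2 + brW \<phi>1 (brW \<psi> \<phi>2)) \<and>
     (\<forall>\<psi>\<in>W. brW \<psi> \<psi> = smul (of_real (1/2)) (Dv (pair \<psi> \<psi>))) \<and>
     (\<forall>\<psi>\<in>W. \<forall>\<phi>\<in>W. rhoD \<psi> (pair \<phi> \<phi>) = smul 2 (pair (brW \<psi> \<phi>) \<phi>)) \<and>
     (\<forall>f g. \<forall>v\<in>V. Dv (smul (f * g) v) + smul (f * g) (Dv v) = smul f (Dv (smul g v)) + smul g (Dv (smul f v)))"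

end

theory Submission
  imports Defs
begin

lemma sum_p_lemma:
  fixes smul :: "'r::{comm_ring_1,real_algebra_1} \<Rightarrow> 'a::ab_group_add \<Rightarrow> 'a"
  fixes p :: "(nat \<Rightarrow> 'r) \<Rightarrow> 'a" and n m :: nat
  assumes padd: "\<And>u v. (\<forall>j\<ge>n. u j = 0) \<Longrightarrow> (\<forall>j\<ge>n. v j = 0) \<Longrightarrow> p (\<lambda>j. u j + v j) = p u + p v"
    and psm: "\<And>f u. (\<forall>j\<ge>n. u j = 0) \<Longrightarrow> p (\<lambda>j. f * u j) = smul f (p u)"
    and "m \<le> n"
  shows "p (\<lambda>j. if j < m then u j else 0) =
         (\<Sum>j<m. smul (u j) (p (\<lambda>k. if k = j then 1 else 0)))"
  using assms(3)
proof (induction m)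
  case 0
  have "p (\<lambda>j. 0 + 0) = p (\<lambda>j. 0) + p (\<lambda>j. 0)" by (rule padd) auto
  then show ?case by simp
next
  case (Suc m)
  have e: "(\<lambda>j. if j < Suc m then u j else 0) =
        (\<lambda>j. (if j < m then u j else 0) + u m * (if j = m then 1 else 0))"
    by (auto simp: less_Suc_eq)
  have "p (\<lambda>j. (if j < m then u j else 0) + u m * (if j = m then 1 else 0)) =
        p (\<lambda>j. if j < m then u j else 0) + p (\<lambda>j. u m * (if j = m then 1 else 0))"
    by (rule padd) (use Suc.prems in auto)
  also have "p (\<lambda>j. u m * (if j = m then 1 else 0)) = smul (u m) (p (\<lambda>k. if k = m then 1 else 0))"
    by (rule psm) (use Suc.prems in auto)
  finally show ?case using e Suc by simp
qed

theorem proposition5p8: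
  fixes smul :: "'r::{comm_ring_1,real_algebra_1} \<Rightarrow> 'a::ab_group_add \<Rightarrow> 'a"
    and A :: "int \<Rightarrow> 'a set" and d :: int and br :: "'a \<Rightarrow> 'a \<Rightarrow> 'a"
    and D :: "'a \<Rightarrow> 'a" and rho0 :: "'a \<Rightarrow> 'r \<Rightarrow> 'r"
  assumes "DGLA smul A d br D"
    and "strongly_anchored smul A d br D rho0"
    and "fgp_module smul (A (-d-1))"
    and "fgp_module smul (A (-d-2))"
  shows "(R_bilinear_on smul (A (-d-1)) (A (-d-2)) br \<longleftrightarrow>
            (\<forall>f. \<forall>\<psi>\<in>A (-d-1). \<forall>\<phi>\<in>A (-d-1). br \<psi> (smul f \<phi>) = smul f (br \<psi> \<phi>))) \<and>
         (R_bilinear_on smul (A (-d-1)) (A (-d-2)) br \<and>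
          nondegenerate_pairing smul br (A (-d-1)) (A (-d-2)) \<and>
          surjective_pairing br (A (-d-1)) (A (-d-2))
          \<longrightarrow> vinogradov_algebroid smul (A (-d-1)) (A (-d-2))
                (\<lambda>\<phi> \<psi>. br (D \<phi>) \<psi>) (\<lambda>\<phi> f. rho0 (D \<phi>) f) br D (\<lambda>\<phi> v. br (D \<phi>) v))"
proof -
  note dg = assms(1)[unfolded DGLA_def graded_LL_def]
  have grm: "graded_module smul A" using dg by meson
  have brc: "\<And>k l a b. a \<in> A k \<Longrightarrow> b \<in> A l \<Longrightarrow> br a b \<in> A (k+l+d)" using dg by meson
  have bil: "\<And>k l. real_bilinear_on smul (A k) (A l) br" using dg by meson
  have jac: "\<And>k l m a b c. a\<in>A k \<Longrightarrow> b\<in>A l \<Longrightarrow> c\<in>A m \<Longrightarrow>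
      br a (br b c) = br (br a b) c + sgnx ((k + d) * (l + d)) (br b (br a c))" using dg by meson
  have Dc: "\<And>k a. a\<in>A k \<Longrightarrow> D a \<in> A (k+1)" using dg by meson
  have Dlin: "\<And>k. real_linear_on smul (A k) D" using dg by meson
  have DD: "\<And>k a. a\<in>A k \<Longrightarrow> D (D a) = 0" using dg by meson
  have Dder: "\<And>k l a b. a\<in>A k \<Longrightarrow> b\<in>A l \<Longrightarrow> D (br a b) = br (D a) b + sgnx (k + d) (br a (D b))"
    using dg by meson
  have skew: "\<And>k l a b. a\<in>A k \<Longrightarrow> b\<in>A l \<Longrightarrow> br b a = - sgnx ((k + d) * (l + d)) (br a b)"
    using dg by meson
  have md: "\<And>k. module_on smul (A k)" using grm by (simp add: graded_module_def)
  have z: "\<And>k. 0 \<in> A k" using md by (simp add: module_on_def)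
  have addc: "\<And>k x y. x \<in> A k \<Longrightarrow> y \<in> A k \<Longrightarrow> x + y \<in> A k" using md by (simp add: module_on_def)
  have smc: "\<And>k f x. x \<in> A k \<Longrightarrow> smul f x \<in> A k" using md by (simp add: module_on_def)
  have smdr: "\<And>k f g x. x \<in> A k \<Longrightarrow> smul (f + g) x = smul f x + smul g x" using md by (simp add: module_on_def)
  have smdl: "\<And>k f x y. x \<in> A k \<Longrightarrow> y \<in> A k \<Longrightarrow> smul f (x + y) = smul f x + smul f y" using md by (simp add: module_on_def)
  have smm: "\<And>k f g x. x \<in> A k \<Longrightarrow> smul (f * g) x = smul f (smul g x)" using md by (simp add: module_on_def)
  have sm1: "\<And>k x. x \<in> A k \<Longrightarrow> smul 1 x = x" using md by (simp add: module_on_def)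
  have smdiff: "\<And>k f g x. x \<in> A k \<Longrightarrow> smul (f - g) x = smul f x - smul g x"
  proof -
    fix k f g x assume x: "x \<in> A k"
    have "smul (f - g + g) x = smul (f - g) x + smul g x" by (rule smdr[OF x])
    then show "smul (f - g) x = smul f x - smul g x" by (simp add: algebra_simps)
  qed
  have braddL: "\<And>k l a a' b. a\<in>A k \<Longrightarrow> a'\<in>A k \<Longrightarrow> b\<in>A l \<Longrightarrow> br (a+a') b = br a b + br a' b"
    using bil by (simp add: real_bilinear_on_def real_linear_on_def)
  have braddR: "\<And>k l a b b'. a\<in>A k \<Longrightarrow> b\<in>A l \<Longrightarrow> b'\<in>A l \<Longrightarrow> br a (b+b') = br a b + br a b'"
    using bil by (simp add: real_bilinear_on_def real_linear_on_def)
  have brrL: "\<And>k l a b c. a\<in>A k \<Longrightarrow> b\<in>A l \<Longrightarrow> br (smul (of_real c) a) b = smul (of_real c) (br a b)"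
    using bil by (simp add: real_bilinear_on_def real_linear_on_def)
  have brrR: "\<And>k l a b c. a\<in>A k \<Longrightarrow> b\<in>A l \<Longrightarrow> br a (smul (of_real c) b) = smul (of_real c) (br a b)"
    using bil by (simp add: real_bilinear_on_def real_linear_on_def)
  have Dadd: "\<And>k x y. x\<in>A k \<Longrightarrow> y\<in>A k \<Longrightarrow> D (x + y) = D x + D y"
    using Dlin by (simp add: real_linear_on_def)
  have Dreal: "\<And>k x c. x\<in>A k \<Longrightarrow> D (smul (of_real c) x) = smul (of_real c) (D x)"
    using Dlin by (simp add: real_linear_on_def)
  have br0: "\<And>k b. b \<in> A k \<Longrightarrow> br 0 b = 0"
  proof -
    fix k b assume b: "b \<in> A k"
    have "br (0+0) b = br 0 b + br 0 b" by (rule braddL[OF z z b])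
    then show "br 0 b = 0" by simp
  qed
  have D0: "D 0 = 0"
  proof -
    have "D (0+0) = D 0 + D 0" by (rule Dadd[OF z[of 0] z[of 0]])
    then show ?thesis by simp
  qed
  note sa = assms(2)[unfolded strongly_anchored_def]
  have rhoadd: "\<And>X f g. X \<in> A (-d) \<Longrightarrow> rho0 X (f + g) = rho0 X f + rho0 X g" using sa by blast
  have rhoreal: "\<And>X f c. X \<in> A (-d) \<Longrightarrow> rho0 X (of_real c * f) = of_real c * rho0 X f" using sa by blast
  have rhoaddX: "\<And>X Y. X \<in> A (-d) \<Longrightarrow> Y \<in> A (-d) \<Longrightarrow> rho0 (X + Y) = (\<lambda>f. rho0 X f + rho0 Y f)" using sa by blast
  have rhosmX: "\<And>X g. X \<in> A (-d) \<Longrightarrow> rho0 (smul g X) = (\<lambda>f. g * rho0 X f)" using sa by blast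
  have anch: "\<And>X k \<psi> f. X \<in> A (-d) \<Longrightarrow> \<psi> \<in> A k \<Longrightarrow> br X (smul f \<psi>) = smul (rho0 X f) \<psi> + smul f (br X \<psi>)"
    using sa by blast
  have rhoD: "\<And>\<phi> f. \<phi> \<in> A (-d-1) \<Longrightarrow> rho0 (D (smul f \<phi>)) = (\<lambda>g. f * rho0 (D \<phi>) g)" using sa by blast
  have Dleib: "\<And>k \<psi> f g. \<psi> \<in> A k \<Longrightarrow> D (smul (f * g) \<psi>) + smul (f * g) (D \<psi>) = smul f (D (smul g \<psi>)) + smul g (D (smul f \<psi>))"
    using sa by blast
  have rho0z: "\<And>f. rho0 0 f = 0"
  proof -
    fix f
    have "rho0 (0+0) = (\<lambda>f. rho0 0 f + rho0 0 f)" by (rule rhoaddX[OF z z])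
    then show "rho0 0 f = 0" by (metis add_cancel_left_left add_0)
  qed
  have DW: "\<And>\<phi>. \<phi> \<in> A (-d-1) \<Longrightarrow> D \<phi> \<in> A (-d)"
    using Dc by (metis diff_add_cancel)
  have DV: "\<And>v. v \<in> A (-d-2) \<Longrightarrow> D v \<in> A (-d-1)"
    using Dc by (metis diff_add_cancel add_diff_eq diff_diff_eq one_add_one)
  have brWW: "\<And>x y. x \<in> A (-d-1) \<Longrightarrow> y \<in> A (-d-1) \<Longrightarrow> br x y \<in> A (-d-2)"
  proof -
    fix x y assume "x \<in> A (-d-1)" "y \<in> A (-d-1)"
    from brc[OF this] show "br x y \<in> A (-d-2)" by (simp add: algebra_simps)
  qed
  have brXW: "\<And>X y. X \<in> A (-d) \<Longrightarrow> y \<in> A (-d-1) \<Longrightarrow> br X y \<in> A (-d-1)"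
  proof -
    fix X y assume "X \<in> A (-d)" "y \<in> A (-d-1)"
    from brc[OF this] show "br X y \<in> A (-d-1)" by (simp add: algebra_simps)
  qed
  have brXV: "\<And>X y. X \<in> A (-d) \<Longrightarrow> y \<in> A (-d-2) \<Longrightarrow> br X y \<in> A (-d-2)"
  proof -
    fix X y assume "X \<in> A (-d)" "y \<in> A (-d-2)"
    from brc[OF this] show "br X y \<in> A (-d-2)" by (simp add: algebra_simps)
  qed
  have symm: "\<And>x y. x \<in> A (-d-1) \<Longrightarrow> y \<in> A (-d-1) \<Longrightarrow> br x y = br y x"
  proof -
    fix x y assume "x \<in> A (-d-1)" "y \<in> A (-d-1)"
    from skew[OF this] show "br x y = br y x" by (simp add: sgnx_def)
  qed

  have Riff: "R_bilinear_on smul (A (-d-1)) (A (-d-2)) br \<longleftrightarrow>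
            (\<forall>f. \<forall>\<psi>\<in>A (-d-1). \<forall>\<phi>\<in>A (-d-1). br \<psi> (smul f \<phi>) = smul f (br \<psi> \<phi>))"
  proof
    assume "R_bilinear_on smul (A (-d-1)) (A (-d-2)) br"
    then show "\<forall>f. \<forall>\<psi>\<in>A (-d-1). \<forall>\<phi>\<in>A (-d-1). br \<psi> (smul f \<phi>) = smul f (br \<psi> \<phi>)"
      by (simp add: R_bilinear_on_def)
  next
    assume r: "\<forall>f. \<forall>\<psi>\<in>A (-d-1). \<forall>\<phi>\<in>A (-d-1). br \<psi> (smul f \<phi>) = smul f (br \<psi> \<phi>)"
    have l: "br (smul f x) y = smul f (br x y)" if "x \<in> A (-d-1)" "y \<in> A (-d-1)" for f x y
    proof -
      have "br (smul f x) y = br y (smul f x)" using symm smc that by metis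
      also have "\<dots> = smul f (br y x)" using r that by blast
      also have "\<dots> = smul f (br x y)" using symm that by metis
      finally show ?thesis .
    qed
    show "R_bilinear_on smul (A (-d-1)) (A (-d-2)) br"
      unfolding R_bilinear_on_def using brWW braddL braddR l r by blast
  qed
  have vin: "R_bilinear_on smul (A (-d-1)) (A (-d-2)) br \<and>
          nondegenerate_pairing smul br (A (-d-1)) (A (-d-2)) \<and>
          surjective_pairing br (A (-d-1)) (A (-d-2))
          \<longrightarrow> vinogradov_algebroid smul (A (-d-1)) (A (-d-2))
                (\<lambda>\<phi> \<psi>. br (D \<phi>) \<psi>) (\<lambda>\<phi> f. rho0 (D \<phi>) f) br D (\<lambda>\<phi> v. br (D \<phi>) v)"
  proof (intro impI)
    assume H: "R_bilinear_on smul (A (-d-1)) (A (-d-2)) br \<and>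
          nondegenerate_pairing smul br (A (-d-1)) (A (-d-2)) \<and>
          surjective_pairing br (A (-d-1)) (A (-d-2))"
    have v3: "\<forall>x\<in>A (-d-1). \<forall>y\<in>A (-d-1). br (D x) y \<in> A (-d-1)" using DW brXW by blast
    have v4: "real_bilinear_on smul (A (-d-1)) (A (-d-1)) (\<lambda>\<phi> \<psi>. br (D \<phi>) \<psi>)"
      unfolding real_bilinear_on_def real_linear_on_def
    proof (intro conjI ballI allI)
      fix x y x' assume "y \<in> A (-d-1)" "x \<in> A (-d-1)" "x' \<in> A (-d-1)"
      then show "br (D (x + x')) y = br (D x) y + br (D x') y"
        using Dadd braddL DW by metis
    next
      fix x y c assume "y \<in> A (-d-1)" "x \<in> A (-d-1)"
      then show "br (D (smul (of_real c) x)) y = smul (of_real c) (br (D x) y)"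
        using Dreal brrL DW by metis
    next
      fix x y y' assume "x \<in> A (-d-1)" "y \<in> A (-d-1)" "y' \<in> A (-d-1)"
      then show "br (D x) (y + y') = br (D x) y + br (D x) y'"
        using braddR DW by metis
    next
      fix x y c assume "x \<in> A (-d-1)" "y \<in> A (-d-1)"
      then show "br (D x) (smul (of_real c) y) = smul (of_real c) (br (D x) y)"
        using brrR DW by metis
    qed
    obtain n :: nat and i :: "'a \<Rightarrow> nat \<Rightarrow> 'r" and p :: "(nat \<Rightarrow> 'r) \<Rightarrow> 'a" where
      iz: "\<forall>x\<in>A (-d-1). \<forall>j\<ge>n. i x j = 0" and
      iadd: "\<forall>x\<in>A (-d-1). \<forall>y\<in>A (-d-1). i (x + y) = (\<lambda>j. i x j + i y j)" and
      ism: "\<forall>f. \<forall>x\<in>A (-d-1). i (smul f x) = (\<lambda>j. f * i x j)" and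
      pin: "\<forall>u. (\<forall>j\<ge>n. u j = 0) \<longrightarrow> p u \<in> A (-d-1)" and
      padd: "\<forall>u v. (\<forall>j\<ge>n. u j = 0) \<longrightarrow> (\<forall>j\<ge>n. v j = 0) \<longrightarrow> p (\<lambda>j. u j + v j) = p u + p v" and
      psm: "\<forall>f u. (\<forall>j\<ge>n. u j = 0) \<longrightarrow> p (\<lambda>j. f * u j) = smul f (p u)" and
      pi: "\<forall>x\<in>A (-d-1). p (i x) = x"
      using assms(3) unfolding fgp_module_def apply (elim exE conjE) apply (rule that) apply assumption apply assumption apply assumption apply assumption  apply assumption apply assumption apply assumption done
    define w where "w j = p (\<lambda>k. if k = j then (1::'r) else 0)" for j
    have wW: "w j \<in> A (-d-1)" if "j < n" for j
      unfolding w_def using pin that by auto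
    have pexp: "\<phi> = (\<Sum>j<n. smul (i \<phi> j) (w j))" if "\<phi> \<in> A (-d-1)" for \<phi>
    proof -
      have "p (\<lambda>j. if j < n then i \<phi> j else 0) = (\<Sum>j<n. smul (i \<phi> j) (w j))"
        unfolding w_def
        by (rule sum_p_lemma[where smul=smul and n=n]) (use padd psm in auto)
      moreover have "(\<lambda>j. if j < n then i \<phi> j else 0) = i \<phi>"
        using iz that by (auto simp: not_less)
      ultimately show ?thesis using pi that by simp
    qed
    have i0: "i 0 j = 0" for j
    proof -
      have "i (0 + 0) = (\<lambda>j. i 0 j + i 0 j)" using iadd z by blast
      then show ?thesis by (metis add_cancel_left_left add_0)
    qed
    have rsum: "finite S \<Longrightarrow> (\<forall>j\<in>S. x j \<in> A (-d-1)) \<Longrightarrow>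
        (\<Sum>j\<in>S. smul (c j) (x j)) \<in> A (-d-1) \<and>
        rho0 (D (\<Sum>j\<in>S. smul (c j) (x j))) h = (\<Sum>j\<in>S. c j * rho0 (D (x j)) h)" for S x c h
    proof (induction S rule: finite_induct)
      case empty
      then show ?case using z D0 rho0z by simp
    next
      case (insert a S)
      then have xa: "x a \<in> A (-d-1)" and IH: "(\<Sum>j\<in>S. smul (c j) (x j)) \<in> A (-d-1)"
        "rho0 (D (\<Sum>j\<in>S. smul (c j) (x j))) h = (\<Sum>j\<in>S. c j * rho0 (D (x j)) h)" by auto
      have sa: "smul (c a) (x a) \<in> A (-d-1)" using smc xa by blast
      have "rho0 (D (smul (c a) (x a) + (\<Sum>j\<in>S. smul (c j) (x j)))) h =
            rho0 (D (smul (c a) (x a))) h + rho0 (D (\<Sum>j\<in>S. smul (c j) (x j))) h"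
        using Dadd[OF sa IH(1)] rhoaddX[OF DW[OF sa] DW[OF IH(1)]] by simp
      also have "\<dots> = c a * rho0 (D (x a)) h + (\<Sum>j\<in>S. c j * rho0 (D (x j)) h)"
        using rhoD[OF xa] IH(2) by simp
      finally show ?case using insert addc[OF sa IH(1)] by simp
    qed
    define dl where "dl X f g = rho0 X (f * g) - f * rho0 X g - rho0 X f * g" for X f g
    have dlann: "smul (dl X f g) \<psi> = 0" if X: "X \<in> A (-d)" and \<psi>: "\<psi> \<in> A k" for X f g \<psi> k
    proof -
      have bX0: "br X \<psi> \<in> A (-d + k + d)" using brc X \<psi> by blast
      have kk: "-d + k + d = k" by simp
      have bX: "br X \<psi> \<in> A k" using bX0 unfolding kk .
      have gp: "smul g \<psi> \<in> A k" using smc \<psi> by blast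
      have "smul (rho0 X (f * g)) \<psi> + smul (f * g) (br X \<psi>) = br X (smul (f * g) \<psi>)"
        using anch[OF X \<psi>] by simp
      also have "\<dots> = br X (smul f (smul g \<psi>))" using smm \<psi> by metis
      also have "\<dots> = smul (rho0 X f) (smul g \<psi>) + smul f (br X (smul g \<psi>))"
        using anch[OF X gp] by simp
      also have "\<dots> = smul (rho0 X f * g) \<psi> + smul f (smul (rho0 X g) \<psi> + smul g (br X \<psi>))"
        using anch[OF X \<psi>] smm \<psi> by metis
      also have "\<dots> = smul (rho0 X f * g) \<psi> + smul (f * rho0 X g) \<psi> + smul (f * g) (br X \<psi>)"
        using smdl[OF smc[OF \<psi>] smc[OF bX]] smm \<psi> bX by (simp add: add.assoc)
      finally have e: "smul (rho0 X (f * g)) \<psi> = smul (rho0 X f * g) \<psi> + smul (f * rho0 X g) \<psi>"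
        by simp
      have "smul (rho0 X (f * g) - f * rho0 X g - rho0 X f * g) \<psi> =
            smul (rho0 X (f * g)) \<psi> - smul (f * rho0 X g) \<psi> - smul (rho0 X f * g) \<psi>"
        using smdiff[OF \<psi>] by simp
      then show ?thesis unfolding dl_def using e by simp
    qed
    have der: "rho0 (D \<phi>) (f * g) = f * rho0 (D \<phi>) g + rho0 (D \<phi>) f * g" if \<phi>: "\<phi> \<in> A (-d-1)" for \<phi> f g
    proof -
      have ws: "\<forall>j\<in>{..<n}. w j \<in> A (-d-1)" using wW by auto
      have r: "rho0 (D \<phi>) h = (\<Sum>j<n. i \<phi> j * rho0 (D (w j)) h)" for h
        using rsum[OF finite_lessThan ws, of "i \<phi>" h] pexp[OF \<phi>] by simp
      have each: "i \<phi> j * dl (D (w j)) f g = 0" if "j < n" for j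
      proof -
        have "smul (dl (D (w j)) f g) \<phi> = 0" using dlann DW wW that \<phi> by blast
        then have "i (smul (dl (D (w j)) f g) \<phi>) j = 0" using i0 by simp
        then show ?thesis using ism \<phi> by (simp add: mult.commute)
      qed
      have "dl (D \<phi>) f g = (\<Sum>j<n. i \<phi> j * dl (D (w j)) f g)"
        unfolding dl_def r
        by (simp add: sum_subtractf sum_distrib_left sum_distrib_right sum.distrib algebra_simps)
      also have "\<dots> = 0" using each by simp
      finally show ?thesis unfolding dl_def by (simp add: algebra_simps)
    qed
    have v5: "\<forall>\<phi>\<in>A (-d-1). is_derivation (\<lambda>f. rho0 (D \<phi>) f)"
      unfolding is_derivation_def using rhoadd rhoreal DW der by simp
    have v6: "\<forall>\<phi>\<in>A (-d-1). \<forall>\<psi>\<in>A (-d-1). (\<lambda>f. rho0 (D (\<phi> + \<psi>)) f) = (\<lambda>f. rho0 (D \<phi>) f + rho0 (D \<psi>) f)"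
      using Dadd rhoaddX DW by simp
    have v7: "\<forall>g. \<forall>\<phi>\<in>A (-d-1). (\<lambda>f. rho0 (D (smul g \<phi>)) f) = (\<lambda>f. g * rho0 (D \<phi>) f)"
      using rhoD by simp
    have v12: "\<forall>v\<in>A (-d-2). D v \<in> A (-d-1)" using DV by blast
    have v14: "\<forall>\<phi>\<in>A (-d-1). \<forall>v\<in>A (-d-2). br (D \<phi>) v \<in> A (-d-2)" using brXV DW by blast
    have v15: "\<forall>\<phi>\<in>A (-d-1). real_linear_on smul (A (-d-2)) (\<lambda>v. br (D \<phi>) v)"
      unfolding real_linear_on_def using braddR brrR DW by metis
    have v16: "\<forall>\<phi>\<in>A (-d-1). \<forall>\<phi>'\<in>A (-d-1). \<forall>v\<in>A (-d-2). br (D (\<phi> + \<phi>')) v = br (D \<phi>) v + br (D \<phi>') v"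
      using Dadd braddL DW by metis
    have v17: "\<forall>(c::real). \<forall>\<phi>\<in>A (-d-1). \<forall>v\<in>A (-d-2). br (D (smul (of_real c) \<phi>)) v = smul (of_real c) (br (D \<phi>) v)"
      using Dreal brrL DW by metis
    have v18: "\<forall>\<phi>\<in>A (-d-1). \<forall>f. \<forall>v\<in>A (-d-2). br (D \<phi>) (smul f v) = smul (rho0 (D \<phi>) f) v + smul f (br (D \<phi>) v)"
      using anch DW by blast
    have v19: "\<forall>\<psi>\<in>A (-d-1). \<forall>\<phi>1\<in>A (-d-1). \<forall>\<phi>2\<in>A (-d-1).
       br (D \<psi>) (br (D \<phi>1) \<phi>2) = br (D (br (D \<psi>) \<phi>1)) \<phi>2 + br (D \<phi>1) (br (D \<psi>) \<phi>2)"
    proof (intro ballI)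
      fix \<psi> \<phi>1 \<phi>2 assume a: "\<psi> \<in> A (-d-1)" "\<phi>1 \<in> A (-d-1)" "\<phi>2 \<in> A (-d-1)"
      have "D (br (D \<psi>) \<phi>1) = br (D (D \<psi>)) \<phi>1 + sgnx (-d + d) (br (D \<psi>) (D \<phi>1))"
        using Dder[OF DW[OF a(1)] a(2)] .
      also have "\<dots> = br (D \<psi>) (D \<phi>1)" using DD[OF a(1)] br0[OF a(2)] by (simp add: sgnx_def)
      finally have e: "D (br (D \<psi>) \<phi>1) = br (D \<psi>) (D \<phi>1)" .
      show "br (D \<psi>) (br (D \<phi>1) \<phi>2) = br (D (br (D \<psi>) \<phi>1)) \<phi>2 + br (D \<phi>1) (br (D \<psi>) \<phi>2)"
        using jac[OF DW[OF a(1)] DW[OF a(2)] a(3)] e by (simp add: sgnx_def)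
    qed
    have half: "(of_real (1/2) :: 'r) * 2 = 1"
    proof -
      have "(of_real (1/2) :: 'r) * 2 = of_real (1/2) * of_real 2" by simp
      also have "\<dots> = of_real (1/2 * 2)" by (simp only: of_real_mult)
      finally show ?thesis by simp
    qed
    have two: "smul 2 x = x + x" if "x \<in> A k" for x k
      using smdr[OF that, of 1 1] sm1[OF that] by (simp add: one_add_one)
    have v20: "\<forall>\<psi>\<in>A (-d-1). br (D \<psi>) \<psi> = smul (of_real (1/2)) (D (br \<psi> \<psi>))"
    proof
      fix \<psi> assume a: "\<psi> \<in> A (-d-1)"
      have X: "br (D \<psi>) \<psi> \<in> A (-d-1)" using brXW DW a by blast
      have "D (br \<psi> \<psi>) = br (D \<psi>) \<psi> + sgnx (-d-1 + d) (br \<psi> (D \<psi>))"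
        using Dder[OF a a] .
      moreover have "br (D \<psi>) \<psi> = - sgnx ((-d-1 + d) * (-d + d)) (br \<psi> (D \<psi>))"
        using skew[OF a DW[OF a]] .
      ultimately have "D (br \<psi> \<psi>) = br (D \<psi>) \<psi> + br (D \<psi>) \<psi>" by (simp add: sgnx_def)
      also have "\<dots> = smul 2 (br (D \<psi>) \<psi>)" using two[OF X] by simp
      finally have "smul (of_real (1/2)) (D (br \<psi> \<psi>)) = smul (of_real (1/2) * 2) (br (D \<psi>) \<psi>)"
        using smm[OF X] by simp
      then show "br (D \<psi>) \<psi> = smul (of_real (1/2)) (D (br \<psi> \<psi>))" using half sm1[OF X] by simp
    qed
    have v21: "\<forall>\<psi>\<in>A (-d-1). \<forall>\<phi>\<in>A (-d-1). br (D \<psi>) (br \<phi> \<phi>) = smul 2 (br (br (D \<psi>) \<phi>) \<phi>)"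
    proof (intro ballI)
      fix \<psi> \<phi> assume a: "\<psi> \<in> A (-d-1)" "\<phi> \<in> A (-d-1)"
      have Y: "br (D \<psi>) \<phi> \<in> A (-d-1)" using brXW DW a by blast
      have "br (D \<psi>) (br \<phi> \<phi>) = br (br (D \<psi>) \<phi>) \<phi> + sgnx ((-d + d) * (-d-1 + d)) (br \<phi> (br (D \<psi>) \<phi>))"
        using jac[OF DW[OF a(1)] a(2) a(2)] .
      also have "\<dots> = br (br (D \<psi>) \<phi>) \<phi> + br (br (D \<psi>) \<phi>) \<phi>"
        using symm[OF a(2) Y] by (simp add: sgnx_def)
      also have "\<dots> = smul 2 (br (br (D \<psi>) \<phi>) \<phi>)" using two[OF brWW[OF Y a(2)]] by simp
      finally show "br (D \<psi>) (br \<phi> \<phi>) = smul 2 (br (br (D \<psi>) \<phi>) \<phi>)" .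
    qed
    have v22: "\<forall>f g. \<forall>v\<in>A (-d-2). D (smul (f * g) v) + smul (f * g) (D v) = smul f (D (smul g v)) + smul g (D (smul f v))"
      using Dleib by blast
    have v9: "\<forall>x\<in>A (-d-1). \<forall>y\<in>A (-d-1). br x y = br y x" using symm by blast
    show "vinogradov_algebroid smul (A (-d-1)) (A (-d-2))
                (\<lambda>\<phi> \<psi>. br (D \<phi>) \<psi>) (\<lambda>\<phi> f. rho0 (D \<phi>) f) br D (\<lambda>\<phi> v. br (D \<phi>) v)"
      unfolding vinogradov_algebroid_def
      using assms(3,4) v3 v4 v5 v6 v7 conjunct1[OF H] conjunct1[OF conjunct2[OF H]] conjunct2[OF conjunct2[OF H]]
        v9 v12 Dlin[of "-d-2"] v14 v15 v16 v17 v18 v19 v20 v21 v22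
      apply (intro conjI) apply (assumption+)? done
  qed
  show ?thesis using Riff vin by blast
qed

end
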